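(* Let $\operatorname{Li}_s(z)=\sum_{m=1}^\infty \frac{z^m}{m^s}$ denote the polylogarithm and $\zeta$ the Riemann zeta function. Then $$\int_0^1 \frac{\operatorname{Li}_4(-x)}{1 + x}\,dx = \frac{17}{16}\zeta (5) -\frac{3}{8}\zeta(2)\zeta(3) -\frac{7}{8}\log(2)\zeta(4).$$ *)

theory Defs
  imports "HOL-Analysis.Analysis"
begin

text \<open>Polylogarithm of integer order s, for real argument with |z| \<le> 1 (where the
  defining series converges for s \<ge> 2): Li_s(z) = sum over m \<ge> 1 of z^m / m^s.\<close>
definition polylog :: "nat \<Rightarrow> real \<Rightarrow> real" where
  "polylog s z = (\<Sum>m. z ^ Suc m / (real (Suc m)) ^ s)"

definition zeta_nat :: "nat \<Rightarrow> real" where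
  "zeta_nat s = (\<Sum>m. 1 / (real (Suc m)) ^ s)"

end

theory Submission
  imports Defs
begin

lemma hs_shift:
  fixes f :: "nat \<Rightarrow> real"
  assumes "\<And>n. n \<ge> 1 \<Longrightarrow> \<bar>f n\<bar> \<le> B / real n ^ 2"
  shows "(f has_sum (\<Sum>m. f (Suc m))) {1..}"
proof -
  have s2: "summable (\<lambda>m. B * inverse (real (Suc m) ^ 2))"
    using inverse_power_summable[of 2, where 'a=real] 
    by (subst summable_Suc_iff) (simp add: summable_mult)
  have "summable (\<lambda>m. norm (f (Suc m)))"
  proof (rule summable_comparison_test'[OF s2, of 0])
    fix n :: nat
    have "\<bar>f (Suc n)\<bar> \<le> B / real (Suc n) ^ 2" using assms[of "Suc n"] by simp
    then show "norm (norm (f (Suc n))) \<le> B * inverse (real (Suc n) ^ 2)"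
      by (simp add: divide_inverse)
  qed
  then have "((\<lambda>m. f (Suc m)) has_sum (\<Sum>m. f (Suc m))) UNIV"
    by (rule norm_summable_imp_has_sum) (auto intro!: summable_sums summable_norm_cancel[OF \<open>summable (\<lambda>m. norm (f (Suc m)))\<close>])
  then show ?thesis
    by (subst has_sum_reindex_bij_witness[where i=Suc and j="\<lambda>n. n - 1" and T=UNIV and h="\<lambda>m. f (Suc m)" and s'="\<Sum>m. f (Suc m)"]) auto
qed

definition zb :: "nat \<Rightarrow> real" where
  "zb k = (\<Sum>m. (-1) ^ Suc m / real (Suc m) ^ k)"

definition aa :: "nat \<Rightarrow> real" where
  "aa n = (\<Sum>j\<in>{1..n}. (-1) ^ j / real j)"

definition gg :: "nat \<Rightarrow> real" where
  "gg n = (\<Sum>j\<in>{1..<n}. (-1) ^ j / real j)"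

lemma inv_pow_le: "n \<ge> 1 \<Longrightarrow> k \<ge> 2 \<Longrightarrow> 1 / real n ^ k \<le> 1 / real n ^ 2"
  by (intro divide_left_mono power_increasing) auto

lemma zeta_hs: "k \<ge> 2 \<Longrightarrow> ((\<lambda>n. 1 / real n ^ k) has_sum zeta_nat k) {1..}"
  unfolding zeta_nat_def
  by (rule hs_shift[where B=1]) (auto simp: inv_pow_le)

lemma zb_hs: "k \<ge> 2 \<Longrightarrow> ((\<lambda>n. (-1) ^ n / real n ^ k) has_sum zb k) {1..}"
  unfolding zb_def
  by (rule hs_shift[where B=1]) (auto simp: inv_pow_le abs_divide power_abs)

lemma zb_eq:
  assumes k: "k \<ge> 2"
  shows "zb k = (2 / 2 ^ k - 1) * zeta_nat k"
proof -
  define h where "h n = 1 / real n ^ k + (-1) ^ n / real n ^ k" for n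
  have h1: "(h has_sum (zeta_nat k + zb k)) {1..}"
    unfolding h_def by (intro has_sum_add zeta_hs zb_hs k)
  have "((\<lambda>j. (2 / 2 ^ k) * (1 / real j ^ k)) has_sum ((2 / 2 ^ k) * zeta_nat k)) {1..}"
    by (intro has_sum_cmult_right zeta_hs k)
  then have "((h \<circ> (\<lambda>j. 2 * j)) has_sum ((2 / 2 ^ k) * zeta_nat k)) {1..}"
    by (rule has_sum_cong[THEN iffD1, rotated]) (auto simp: h_def power_mult_distrib)
  then have "(h has_sum ((2 / 2 ^ k) * zeta_nat k)) ((\<lambda>j. 2 * j) ` {1..})"
    by (subst has_sum_reindex) (auto simp: inj_on_def)
  then have h2: "(h has_sum ((2 / 2 ^ k) * zeta_nat k)) {1..}"
  proof (rule has_sum_cong_neutral[THEN iffD1, rotated -1])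
    fix x :: nat assume "x \<in> {1..} - (\<lambda>j. 2 * j) ` {1..}"
    then have "odd x"
    proof (intro notI)
      assume "x \<in> {1..} - (\<lambda>j. 2 * j) ` {1..}" "even x"
      then obtain b where "x = 2 * b" by (auto elim!: evenE)
      moreover have "b \<ge> 1" using \<open>x \<in> {1..} - (\<lambda>j. 2 * j) ` {1..}\<close> \<open>x = 2 * b\<close> by auto
      ultimately have "x \<in> (\<lambda>j. 2 * j) ` {1..}" by auto
      with \<open>x \<in> {1..} - (\<lambda>j. 2 * j) ` {1..}\<close> show False by auto
    qed
    then show "h x = 0" by (simp add: h_def)
  qed auto
  from has_sum_unique[OF h1 h2] show ?thesis by (simp add: algebra_simps)
qed

lemma aa_Suc: "aa (Suc n) = aa n + (-1) ^ Suc n / real (Suc n)"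
  unfolding aa_def by (simp add: sum.cl_ivl_Suc)

lemma aa_gg: "n \<ge> 1 \<Longrightarrow> aa n = gg n + (-1) ^ n / real n"
proof (cases n)
  case (Suc k)
  have "gg (Suc k) = aa k" unfolding gg_def aa_def by (simp add: atLeastLessThanSuc_atLeastAtMost)
  then show ?thesis using Suc by (simp add: aa_Suc)
qed simp

lemma aa_bound: "\<bar>aa n\<bar> \<le> real n"
proof -
  have "\<bar>aa n\<bar> \<le> (\<Sum>j\<in>{1..n}. \<bar>(-1) ^ j / real j\<bar>)"
    unfolding aa_def by (rule sum_abs)
  also have "\<dots> \<le> (\<Sum>j\<in>{1..n}. 1)"
    by (intro sum_mono) (auto simp: abs_divide power_abs)
  finally show ?thesis by simp
qed

lemma gg_bound: "\<bar>gg n\<bar> \<le> real n"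
proof -
  have "\<bar>gg n\<bar> \<le> (\<Sum>j\<in>{1..<n}. \<bar>(-1) ^ j / real j\<bar>)"
    unfolding gg_def by (rule sum_abs)
  also have "\<dots> \<le> (\<Sum>j\<in>{1..<n}. 1)"
    by (intro sum_mono) (auto simp: abs_divide power_abs)
  finally show ?thesis by simp
qed

lemma aa_alt: "(\<Sum>i<y. (-1) ^ i / real (Suc i)) = - aa y"
  by (induction y) (auto simp: aa_Suc aa_def)

lemma J_int: "((\<lambda>x::real. x ^ m / (1 + x)) has_integral ((-1) ^ m * (ln 2 + aa m))) {0..1}"
proof (induction m)
  case 0
  have "((\<lambda>x::real. 1 / (1 + x)) has_integral (ln (1 + 1) - ln (1 + 0))) {0..1}"
  proof (rule fundamental_theorem_of_calculus)
    fix x :: real assume "x \<in> {0..1}"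
    then show "((\<lambda>x. ln (1 + x)) has_vector_derivative 1 / (1 + x)) (at x within {0..1})"
      by (auto intro!: derivative_eq_intros simp: has_real_derivative_iff_has_vector_derivative[symmetric])
  qed simp
  then show ?case by (simp add: aa_def)
next
  case (Suc m)
  have p: "((\<lambda>x::real. x ^ m) has_integral (1 ^ Suc m / Suc m - 0 ^ Suc m / Suc m)) {0..1}"
  proof (rule fundamental_theorem_of_calculus)
    fix x :: real assume "x \<in> {0..1}"
    show "((\<lambda>x. x ^ Suc m / Suc m) has_vector_derivative x ^ m) (at x within {0..1})"
    proof -
      have e: "real m * x ^ (m - Suc 0) * x = real m * x^m" by (cases m) auto
      have "x ^ m + real m * x ^ m = real (Suc m) * x^m" by (simp add: algebra_simps)
      then have "(x ^ m + real m * x ^ (m - Suc 0) * x) / real (Suc m) = x ^ m" by (simp add: e)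
      then show ?thesis
        by (auto intro!: derivative_eq_intros simp: has_real_derivative_iff_has_vector_derivative[symmetric] simp del: of_nat_Suc)
    qed
  qed simp
  have "((\<lambda>x::real. x ^ m - x ^ m / (1 + x)) has_integral (1 / Suc m - (-1) ^ m * (ln 2 + aa m))) {0..1}"
    using has_integral_diff[OF p Suc.IH] by simp
  then have "((\<lambda>x::real. x ^ Suc m / (1 + x)) has_integral (1 / Suc m - (-1) ^ m * (ln 2 + aa m))) {0..1}"
    by (rule has_integral_cong[THEN iffD1, rotated]) (auto simp: field_simps)
  then show ?case by (simp add: aa_Suc algebra_simps)
qed

lemma int_series:
  "integral {0..1} (\<lambda>x::real. polylog 4 (- x) / (1 + x)) = (\<Sum>m. (ln 2 + aa (Suc m)) / real (Suc m) ^ 4)"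
proof -
  define t where "t m x = (- x) ^ Suc m / real (Suc m) ^ 4" for m and x :: real
  define f where "f n x = (\<Sum>m<n. t m x) / (1 + x)" for n x
  define c where "c m = (ln 2 + aa (Suc m)) / real (Suc m) ^ 4" for m
  define Z where "Z = (\<Sum>m. 1 / real (Suc m) ^ 4)"
  have sZ: "summable (\<lambda>m. 1 / real (Suc m) ^ 4)"
    using inverse_power_summable[of 4, where 'a=real]
    by (subst summable_Suc_iff) (simp add: divide_inverse)
  have tb: "\<bar>t m x\<bar> \<le> 1 / real (Suc m) ^ 4" if "x \<in> {0..1}" for m x
  proof -
    have "\<bar>x\<bar> ^ Suc m \<le> 1" using that by (intro power_le_one) auto
    then have a: "\<bar>(- x) ^ Suc m\<bar> \<le> 1" by (simp only: power_abs abs_minus_cancel)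
    have "\<bar>t m x\<bar> = \<bar>(- x) ^ Suc m\<bar> / real (Suc m) ^ 4"
      unfolding t_def abs_divide by simp
    also have "\<dots> \<le> 1 / real (Suc m) ^ 4" by (intro divide_right_mono a) simp
    finally show ?thesis .
  qed
  have fint: "(f n has_integral (\<Sum>m<n. c m)) {0..1}" for n
  proof -
    have each: "((\<lambda>x. t m x / (1 + x)) has_integral c m) {0..1}" for m
    proof -
      have "((\<lambda>x. ((-1) ^ Suc m / real (Suc m) ^ 4) * (x ^ Suc m / (1 + x))) has_integral
          ((-1) ^ Suc m / real (Suc m) ^ 4) * ((-1) ^ Suc m * (ln 2 + aa (Suc m)))) {0..1}"
        by (rule has_integral_cmult_real) (rule J_int)
      moreover have "((-1) ^ Suc m / real (Suc m) ^ 4) * ((-1) ^ Suc m * (ln 2 + aa (Suc m))) = c m"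
        unfolding c_def by (simp del: of_nat_Suc)
      moreover have "((-1) ^ Suc m / real (Suc m) ^ 4) * (x ^ Suc m / (1 + x)) = t m x / (1 + x)" for x
      proof -
        have e: "(- x) ^ Suc m = (-1) ^ Suc m * x ^ Suc m" by (rule power_minus)
        show ?thesis unfolding t_def e by simp
      qed
      ultimately show ?thesis by simp
    qed
    have "((\<lambda>x. \<Sum>m<n. t m x / (1 + x)) has_integral (\<Sum>m<n. c m)) {0..1}"
      by (rule has_integral_sum) (auto intro: each)
    then show ?thesis unfolding f_def by (simp add: sum_divide_distrib)
  qed
  have conv: "(\<lambda>n. f n x) \<longlonglongrightarrow> polylog 4 (- x) / (1 + x)" if "x \<in> {0..1}" for x
  proof -
    have "summable (\<lambda>m. t m x)"
      by (rule summable_comparison_test'[OF sZ, of 0]) (use tb that in auto)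
    then have "(\<lambda>m. t m x) sums polylog 4 (- x)"
      unfolding polylog_def t_def by (simp add: summable_sums)
    then have "(\<lambda>n. \<Sum>m<n. t m x) \<longlonglongrightarrow> polylog 4 (- x)" by (simp add: sums_def)
    then show ?thesis unfolding f_def by (intro tendsto_divide tendsto_const) (use that in auto)
  qed
  have bnd: "norm (f n x) \<le> Z" if "x \<in> {0..1}" for n x
  proof -
    have "\<bar>\<Sum>m<n. t m x\<bar> \<le> (\<Sum>m<n. \<bar>t m x\<bar>)" by (rule sum_abs)
    also have "\<dots> \<le> (\<Sum>m<n. 1 / real (Suc m) ^ 4)" by (intro sum_mono tb that)
    also have "\<dots> \<le> Z" unfolding Z_def by (intro sum_le_suminf sZ) auto
    finally have 1: "\<bar>\<Sum>m<n. t m x\<bar> \<le> Z" .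
    have "\<bar>f n x\<bar> = \<bar>\<Sum>m<n. t m x\<bar> / (1 + x)" using that unfolding f_def by (simp add: abs_divide)
    also have "\<dots> \<le> \<bar>\<Sum>m<n. t m x\<bar>" using divide_left_mono[of 1 "1 + x" "\<bar>\<Sum>m<n. t m x\<bar>"] that by simp
    finally show ?thesis using 1 by simp
  qed
  have "(\<lambda>n. integral {0..1} (f n)) \<longlonglongrightarrow> integral {0..1} (\<lambda>x. polylog 4 (- x) / (1 + x))"
    by (rule dominated_convergence(2)[where h="\<lambda>_. Z"]) (use fint bnd conv in auto)
  moreover have "integral {0..1} (f n) = (\<Sum>m<n. c m)" for n using fint[of n] by (rule integral_unique)
  ultimately have "c sums integral {0..1} (\<lambda>x. polylog 4 (- x) / (1 + x))"
    by (simp add: sums_def)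
  then show ?thesis unfolding c_def by (simp add: sums_iff)
qed

lemma hs_to_suminf:
  fixes f :: "nat \<Rightarrow> real"
  assumes "(f has_sum S) {1..}"
  shows "(\<Sum>m. f (Suc m)) = S"
proof -
  have "((\<lambda>m. f (Suc m)) has_sum S) UNIV"
    using assms
    by (subst has_sum_reindex_bij_witness[where i="\<lambda>n. n - 1" and j=Suc and T="{1..}" and h=f and s'=S]) auto
  then have "(\<lambda>m. f (Suc m)) sums S" by (rule has_sum_imp_sums)
  then show ?thesis by (rule sums_unique[symmetric])
qed

lemma lin_bound:
  assumes n: "n \<ge> 1" and v: "\<bar>v\<bar> \<le> real n" and k: "k \<ge> 3"
  shows "\<bar>v / real n ^ k\<bar> \<le> 1 / real n ^ 2"
proof -
  obtain j where j: "k = Suc j" "j \<ge> 2" using k by (cases k) auto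
  have "\<bar>v / real n ^ k\<bar> = \<bar>v\<bar> / real n ^ k" by (simp add: abs_divide)
  also have "\<dots> \<le> real n / real n ^ k" using n by (intro divide_right_mono v) auto
  also have "\<dots> = 1 / real n ^ j" using n j by simp
  also have "\<dots> \<le> 1 / real n ^ 2" using n j by (intro inv_pow_le) auto
  finally show ?thesis .
qed

definition G1 :: real where "G1 = infsum (\<lambda>n. gg n / real n ^ 4) {1..}"
definition G2 :: real where "G2 = infsum (\<lambda>n. (-1) ^ n * gg n / real n ^ 4) {1..}"

lemma G1_hs: "((\<lambda>n. gg n / real n ^ 4) has_sum G1) {1..}"
proof -
  have "((\<lambda>n. gg n / real n ^ 4) has_sum (\<Sum>m. gg (Suc m) / real (Suc m) ^ 4)) {1..}"
    by (rule hs_shift[where B=1], rule lin_bound) (auto intro: gg_bound)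
  then show ?thesis unfolding G1_def by (simp add: has_sum_iff)
qed

lemma G2_hs: "((\<lambda>n. (-1) ^ n * gg n / real n ^ 4) has_sum G2) {1..}"
proof -
  have "((\<lambda>n. (-1) ^ n * gg n / real n ^ 4) has_sum (\<Sum>m. (-1) ^ Suc m * gg (Suc m) / real (Suc m) ^ 4)) {1..}"
    by (rule hs_shift[where B=1], rule lin_bound) (auto simp: abs_mult power_abs gg_bound)
  then show ?thesis unfolding G2_def by (simp add: has_sum_iff)
qed

lemma I_decomp:
  "(\<Sum>m. (ln 2 + aa (Suc m)) / real (Suc m) ^ 4) = ln 2 * zeta_nat 4 + G1 + zb 5"
proof -
  have "((\<lambda>n. ln 2 * (1 / real n ^ 4) + gg n / real n ^ 4 + (-1) ^ n / real n ^ 5) has_sum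
          (ln 2 * zeta_nat 4 + G1 + zb 5)) {1..}"
    by (intro has_sum_add has_sum_cmult_right zeta_hs zb_hs G1_hs) auto
  then have "((\<lambda>n. (ln 2 + aa n) / real n ^ 4) has_sum (ln 2 * zeta_nat 4 + G1 + zb 5)) {1..}"
  proof (rule has_sum_cong[THEN iffD1, rotated])
    fix n :: nat assume "n \<in> {1..}"
    then have n: "n \<ge> 1" by simp
    then show "ln 2 * (1 / real n ^ 4) + gg n / real n ^ 4 + (-1) ^ n / real n ^ 5 = (ln 2 + aa n) / real n ^ 4"
    proof -
      have e: "real n ^ 5 = real n * real n ^ 4" by (subst power_Suc[symmetric]) simp
      show ?thesis using n by (simp only: e aa_gg) (simp add: field_simps)
    qed
  qed
  then show ?thesis by (rule hs_to_suminf)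
qed

lemma inner_hs:
  assumes y: "y \<ge> 1"
  shows "((\<lambda>x. (-1) ^ x / (real x * (real x + real y))) has_sum
           ((- ln 2 + (-1) ^ y * (ln 2 + aa y)) / real y)) {1..}"
proof -
  have h: "((\<lambda>x. (-1) ^ x / (real x * (real x + real y))) has_sum
       (\<Sum>m. (-1) ^ Suc m / (real (Suc m) * (real (Suc m) + real y)))) {1..}"
  proof (rule hs_shift[where B=1])
    fix n :: nat assume n: "n \<ge> 1"
    have "real n * real n \<le> real n * (real n + real y)" by (intro mult_left_mono) auto
    then have "1 / (real n * (real n + real y)) \<le> 1 / real n ^ 2"
      using n by (intro divide_left_mono) (auto simp: power2_eq_square)
    then show "\<bar>(-1) ^ n / (real n * (real n + real y))\<bar> \<le> 1 / real n ^ 2"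
      by (simp add: abs_divide power_abs abs_mult)
  qed
  have alt: "(\<lambda>k. (-1) ^ k / real (Suc k)) sums ln 2" by (rule alternating_harmonic_series_sums)
  have s1: "(\<lambda>m. (-1) ^ Suc m / real (Suc m)) sums (- ln 2)"
    using sums_minus[OF alt] by simp
  have "(\<lambda>i. (-1) ^ (i + y) / real (Suc (i + y))) sums (ln 2 + aa y)"
    using sums_split_initial_segment[OF alt, of y] by (simp add: aa_alt del: of_nat_Suc)
  from sums_mult[OF this, of "- ((-1) ^ y)"]
  have s2: "(\<lambda>m. (-1) ^ Suc m / (real (Suc m) + real y)) sums (- ((-1) ^ y) * (ln 2 + aa y))"
  proof (rule sums_cong[THEN iffD1, rotated])
    fix m
    have yy: "(-1::real) ^ y * (-1) ^ y = 1"
      by (simp add: power_add[symmetric])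
    have "- ((-1::real) ^ y) * ((-1) ^ (m + y) / real (Suc (m + y))) =
          - ((-1) ^ y * (-1) ^ y) * (-1) ^ m / real (Suc (m + y))"
      by (simp add: power_add)
    also have "\<dots> = (-1) ^ Suc m / (real (Suc m) + real y)" by (simp add: yy)
    finally show "- ((-1::real) ^ y) * ((-1) ^ (m + y) / real (Suc (m + y))) = (-1) ^ Suc m / (real (Suc m) + real y)" .
  qed
  have "(\<lambda>m. (1 / real y) * ((-1) ^ Suc m / real (Suc m) - (-1) ^ Suc m / (real (Suc m) + real y)))
          sums ((1 / real y) * (- ln 2 - (- ((-1) ^ y) * (ln 2 + aa y))))"
    by (intro sums_mult sums_diff s1 s2)
  moreover have "(\<lambda>m. 1 / real y * ((-1) ^ Suc m / real (Suc m) - (-1) ^ Suc m / (real (Suc m) + real y))) =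
          (\<lambda>m. (-1) ^ Suc m / (real (Suc m) * (real (Suc m) + real y)))"
  proof (rule ext)
    fix m
    show "1 / real y * ((-1) ^ Suc m / real (Suc m) - (-1) ^ Suc m / (real (Suc m) + real y)) =
          (-1) ^ Suc m / (real (Suc m) * (real (Suc m) + real y))"
      using y by (simp add: field_simps del: of_nat_Suc power_Suc)
  qed
  moreover have "1 / real y * (- ln 2 - - ((-1) ^ y) * (ln 2 + aa y)) = (- ln 2 + (-1) ^ y * (ln 2 + aa y)) / real y"
    by (simp add: field_simps)
  ultimately have "(\<lambda>m. (-1) ^ Suc m / (real (Suc m) * (real (Suc m) + real y)))
          sums ((- ln 2 + (-1) ^ y * (ln 2 + aa y)) / real y)" by simp
  with h show ?thesis by (simp add: sums_iff)
qed

abbreviation PP :: "(nat \<times> nat) set" where "PP \<equiv> {1..} \<times> {1..}"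

lemma sq_summable: "(\<lambda>(y, x). 1 / real (y * y * x * x)) summable_on PP"
proof (rule summable_on_SigmaI[where g="\<lambda>y. (1 / real y ^ 2) * zeta_nat 2"])
  fix y :: nat assume "y \<in> {1..}"
  have "((\<lambda>x. (1 / real y ^ 2) * (1 / real x ^ 2)) has_sum ((1 / real y ^ 2) * zeta_nat 2)) {1..}"
    by (intro has_sum_cmult_right zeta_hs) auto
  then show "((\<lambda>x. case (y, x) of (y, x) \<Rightarrow> 1 / real (y * y * x * x)) has_sum (1 / real y ^ 2) * zeta_nat 2) {1..}"
    by (simp add: power2_eq_square mult.assoc)
next
  have "((\<lambda>y. (1 / real y ^ 2) * zeta_nat 2) has_sum (zeta_nat 2 * zeta_nat 2)) {1..}"
    by (intro has_sum_cmult_left zeta_hs) auto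
  then show "(\<lambda>y. (1 / real y ^ 2) * zeta_nat 2) summable_on {1..}" by (rule has_sum_imp_summable)
qed auto

lemma dom_summable:
  fixes F :: "nat \<times> nat \<Rightarrow> real"
  assumes "\<And>y x. y \<ge> 1 \<Longrightarrow> x \<ge> 1 \<Longrightarrow> \<bar>F (y, x)\<bar> \<le> 1 / real (y * y * x * x)"
  shows "F summable_on PP"
proof -
  have "(\<lambda>p. norm (F p)) summable_on PP"
  proof (rule summable_on_comparison_test[OF sq_summable])
    fix p assume "p \<in> PP"
    then obtain y x where p: "p = (y, x)" "y \<ge> 1" "x \<ge> 1" by auto
    show "norm (F p) \<le> (case p of (y, x) \<Rightarrow> 1 / real (y * y * x * x))"
      using assms[OF p(2,3)] p(1) by simp
  qed simp
  then show ?thesis by (rule summable_on_iff_abs_summable_on_real[THEN iffD2])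
qed

lemma bnd_nat:
  fixes s :: real
  assumes "0 < A" "A \<le> B" "\<bar>s\<bar> = 1"
  shows "\<bar>s / real B\<bar> \<le> 1 / real A"
proof -
  have "\<bar>s / real B\<bar> = 1 / real B" using assms by (simp add: abs_divide)
  also have "\<dots> \<le> 1 / real A" using assms by (intro divide_left_mono) auto
  finally show ?thesis .
qed

lemma neg1_sq: "(-1::real) ^ y * (-1) ^ y = 1"
  by (simp add: power_add[symmetric])

lemma tri1:
  fixes h w :: "nat \<Rightarrow> real"
  assumes "(\<lambda>(y, x). h x * w (x + y)) summable_on PP"
  shows "((\<lambda>n. w n * (\<Sum>m\<in>{1..<n}. h m)) has_sum infsum (\<lambda>(y, x). h x * w (x + y)) PP) {1..}"
proof -
  define S where "S = infsum (\<lambda>(y, x). h x * w (x + y)) PP"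
  have "((\<lambda>(y, x). h x * w (x + y)) has_sum S) PP" using assms unfolding S_def by simp
  then have "((\<lambda>(n, m). h m * w n) has_sum S) (Sigma {1..} (\<lambda>n. {1..<n}))"
    by (subst (asm) has_sum_reindex_bij_witness[where i="\<lambda>(n, m). (n - m, m)" and j="\<lambda>(y, x). (x + y, x)"
          and T="Sigma {1..} (\<lambda>n. {1..<n})" and h="\<lambda>(n, m). h m * w n" and s'=S]) auto
  then have "((\<lambda>n. w n * (\<Sum>m\<in>{1..<n}. h m)) has_sum S) {1..}"
  proof (rule has_sum_SigmaD)
    fix n :: nat assume "n \<in> {1..}"
    have "((\<lambda>m. h m * w n) has_sum (\<Sum>m\<in>{1..<n}. h m * w n)) {1..<n}"
      by (rule has_sum_finite) simp
    then show "((\<lambda>m. case (n, m) of (n, m) \<Rightarrow> h m * w n) has_sum w n * (\<Sum>m\<in>{1..<n}. h m)) {1..<n}"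
      by (simp add: sum_distrib_left mult.commute)
  qed
  then show ?thesis unfolding S_def .
qed

lemma tri2:
  fixes h w :: "nat \<Rightarrow> real"
  assumes "(\<lambda>(y, x). h y * w (x + y)) summable_on PP"
  shows "((\<lambda>n. w n * (\<Sum>m\<in>{1..<n}. h m)) has_sum infsum (\<lambda>(y, x). h y * w (x + y)) PP) {1..}"
proof -
  define S where "S = infsum (\<lambda>(y, x). h y * w (x + y)) PP"
  have "((\<lambda>(y, x). h y * w (x + y)) has_sum S) PP" using assms unfolding S_def by simp
  then have "((\<lambda>(n, m). h m * w n) has_sum S) (Sigma {1..} (\<lambda>n. {1..<n}))"
    by (subst (asm) has_sum_reindex_bij_witness[where i="\<lambda>(n, m). (m, n - m)" and j="\<lambda>(y, x). (x + y, y)"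
          and T="Sigma {1..} (\<lambda>n. {1..<n})" and h="\<lambda>(n, m). h m * w n" and s'=S]) auto
  then have "((\<lambda>n. w n * (\<Sum>m\<in>{1..<n}. h m)) has_sum S) {1..}"
  proof (rule has_sum_SigmaD)
    fix n :: nat assume "n \<in> {1..}"
    have "((\<lambda>m. h m * w n) has_sum (\<Sum>m\<in>{1..<n}. h m * w n)) {1..<n}"
      by (rule has_sum_finite) simp
    then show "((\<lambda>m. case (n, m) of (n, m) \<Rightarrow> h m * w n) has_sum w n * (\<Sum>m\<in>{1..<n}. h m)) {1..<n}"
      by (simp add: sum_distrib_left mult.commute)
  qed
  then show ?thesis unfolding S_def .
qed

lemma bnd5:
  fixes s :: real and a1 a2 a3 a4 a5 b1 b2 b3 b4 b5 :: nat
  assumes "a1 \<le> b1" "a2 \<le> b2" "a3 \<le> b3" "a4 \<le> b4" "a5 \<le> b5" "0 < a1 * a2 * a3 * a4 * a5" "\<bar>s\<bar> = 1"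
  shows "\<bar>s / real (b1 * b2 * b3 * b4 * b5)\<bar> \<le> 1 / real (a1 * a2 * a3 * a4 * a5)"
  by (rule bnd_nat) (use assms in \<open>auto intro!: mult_le_mono\<close>)

definition uu :: "nat \<times> nat \<Rightarrow> real" where
  "uu = (\<lambda>(y, x). (-1) ^ x / real (x * y ^ 3 * (x + y)))"
definition t1 :: "nat \<times> nat \<Rightarrow> real" where
  "t1 = (\<lambda>(y, x). (-1) ^ x / real (x * (x + y) ^ 4))"
definition t2 :: "nat \<times> nat \<Rightarrow> real" where
  "t2 = (\<lambda>(y, x). (-1) ^ x / real (y * (x + y) ^ 4))"
definition t3 :: "nat \<times> nat \<Rightarrow> real" where
  "t3 = (\<lambda>(y, x). (-1) ^ x / real (y ^ 2 * (x + y) ^ 3))"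
definition t4 :: "nat \<times> nat \<Rightarrow> real" where
  "t4 = (\<lambda>(y, x). (-1) ^ x / real (y ^ 3 * (x + y) ^ 2))"

lemma uu_sum: "uu summable_on PP"
proof (rule dom_summable)
  fix y x :: nat assume xy: "y \<ge> 1" "x \<ge> 1"
  have "\<bar>(-1) ^ x / real (x * (x + y) * y * y * y)\<bar> \<le> 1 / real (x * x * y * y * 1)"
    by (rule bnd5) (use xy in auto)
  then show "\<bar>uu (y, x)\<bar> \<le> 1 / real (y * y * x * x)"
    by (simp add: uu_def mult_ac power3_eq_cube)
qed

lemma t1_sum: "t1 summable_on PP"
proof (rule dom_summable)
  fix y x :: nat assume xy: "y \<ge> 1" "x \<ge> 1"
  have "\<bar>(-1) ^ x / real (x * (x + y) * (x + y) * (x + y) * (x + y))\<bar> \<le> 1 / real (x * x * y * y * 1)"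
    by (rule bnd5) (use xy in auto)
  then show "\<bar>t1 (y, x)\<bar> \<le> 1 / real (y * y * x * x)"
    by (simp add: t1_def mult_ac power4_eq_xxxx)
qed

lemma t2_sum: "t2 summable_on PP"
proof (rule dom_summable)
  fix y x :: nat assume xy: "y \<ge> 1" "x \<ge> 1"
  have "\<bar>(-1) ^ x / real (y * (x + y) * (x + y) * (x + y) * (x + y))\<bar> \<le> 1 / real (y * x * x * y * 1)"
    by (rule bnd5) (use xy in auto)
  then show "\<bar>t2 (y, x)\<bar> \<le> 1 / real (y * y * x * x)"
    by (simp add: t2_def mult_ac power4_eq_xxxx)
qed

lemma t3_sum: "t3 summable_on PP"
proof (rule dom_summable)
  fix y x :: nat assume xy: "y \<ge> 1" "x \<ge> 1"
  have "\<bar>(-1) ^ x / real (y * y * (x + y) * (x + y) * (x + y))\<bar> \<le> 1 / real (y * y * x * x * 1)"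
    by (rule bnd5) (use xy in auto)
  then show "\<bar>t3 (y, x)\<bar> \<le> 1 / real (y * y * x * x)"
    by (simp add: t3_def mult_ac power3_eq_cube power2_eq_square)
qed

lemma t4_sum: "t4 summable_on PP"
proof (rule dom_summable)
  fix y x :: nat assume xy: "y \<ge> 1" "x \<ge> 1"
  have "\<bar>(-1) ^ x / real (y * y * (x + y) * (x + y) * y)\<bar> \<le> 1 / real (y * y * x * x * 1)"
    by (rule bnd5) (use xy in auto)
  then show "\<bar>t4 (y, x)\<bar> \<le> 1 / real (y * y * x * x)"
    by (simp add: t4_def mult_ac power3_eq_cube power2_eq_square)
qed

lemma neg1_shift: "(-1::real) ^ y * (-1) ^ (x + y) = (-1) ^ x"
proof -
  have "(-1::real) ^ y * (-1) ^ (x + y) = (-1) ^ x * ((-1) ^ y * (-1) ^ y)"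
    by (simp add: power_add mult_ac)
  then show ?thesis by (simp add: neg1_sq)
qed

lemma pf:
  fixes a b N :: real
  assumes a: "a > 0" and b: "b > 0" and N: "N = a + b"
  shows "1/(a*N^4) + 1/(b*N^4) + 1/(b^2*N^3) + 1/(b^3*N^2) = 1/(a*b^3*N)"
proof -
  have Np: "N > 0" using a b N by simp
  have key: "b^3 + a*b^2 + a*b*N + a*N^2 = N^3"
    unfolding N by (simp add: power3_eq_cube power2_eq_square algebra_simps)
  have "1/(a*N^4) + 1/(b*N^4) + 1/(b^2*N^3) + 1/(b^3*N^2) = (b^3 + a*b^2 + a*b*N + a*N^2)/(a*b^3*N^4)"
    using a b Np by (simp add: field_simps power2_eq_square power3_eq_cube power4_eq_xxxx)
  also have "\<dots> = N^3/(a*b^3*N^4)" by (simp only: key)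
  also have "\<dots> = 1/(a*b^3*N)" using a b Np by (simp add: field_simps power3_eq_cube power4_eq_xxxx)
  finally show ?thesis .
qed

lemma uu_decomp:
  assumes "y \<ge> 1" "x \<ge> 1"
  shows "t1 (y, x) + t2 (y, x) + t3 (y, x) + t4 (y, x) = uu (y, x)"
proof -
  have "t1 (y, x) + t2 (y, x) + t3 (y, x) + t4 (y, x) = (-1) ^ x * (1/(real x*(real x + real y)^4) +
     1/(real y*(real x + real y)^4) + 1/(real y^2*(real x + real y)^3) + 1/(real y^3*(real x + real y)^2))"
    by (simp add: t1_def t2_def t3_def t4_def ring_distribs)
  also have "\<dots> = (-1) ^ x * (1 / (real x * real y ^ 3 * (real x + real y)))"
    using assms by (subst pf) auto
  also have "\<dots> = uu (y, x)" by (simp add: uu_def)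
  finally show ?thesis .
qed

lemma T1_eq: "infsum t1 PP = G1"
proof -
  have e: "t1 = (\<lambda>(y, x). (\<lambda>x. (-1) ^ x / real x) x * (\<lambda>n. 1 / real n ^ 4) (x + y))"
    by (auto simp: t1_def fun_eq_iff)
  have "((\<lambda>n. 1 / real n ^ 4 * (\<Sum>m\<in>{1..<n}. (-1) ^ m / real m)) has_sum infsum t1 PP) {1..}"
    using tri1[of "\<lambda>x. (-1) ^ x / real x" "\<lambda>n. 1 / real n ^ 4"] t1_sum unfolding e by simp
  then have "((\<lambda>n. gg n / real n ^ 4) has_sum infsum t1 PP) {1..}"
    by (simp add: gg_def)
  with G1_hs show ?thesis by (rule has_sum_unique[symmetric])
qed

lemma T2_eq: "infsum t2 PP = G2"
proof -
  have e: "t2 = (\<lambda>(y, x). (\<lambda>x. (-1) ^ x / real x) y * (\<lambda>n. (-1) ^ n / real n ^ 4) (x + y))"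
  proof (intro ext, clarify)
    fix y x :: nat
    have "(-1) ^ y / real y * ((-1) ^ (x + y) / real (x + y) ^ 4) = ((-1) ^ y * (-1) ^ (x + y)) / (real y * real (x + y) ^ 4)"
      by simp
    also have "\<dots> = t2 (y, x)" by (simp add: neg1_shift t2_def)
    finally show "t2 (y, x) = (-1) ^ y / real y * ((-1) ^ (x + y) / real (x + y) ^ 4)" by simp
  qed
  have "((\<lambda>n. (-1) ^ n / real n ^ 4 * (\<Sum>m\<in>{1..<n}. (-1) ^ m / real m)) has_sum infsum t2 PP) {1..}"
    using tri2[of "\<lambda>x. (-1) ^ x / real x" "\<lambda>n. (-1) ^ n / real n ^ 4"] t2_sum unfolding e by simp
  then have "((\<lambda>n. (-1) ^ n * gg n / real n ^ 4) has_sum infsum t2 PP) {1..}"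
    by (simp add: gg_def)
  with G2_hs show ?thesis by (rule has_sum_unique[symmetric])
qed

definition FF :: "nat \<times> nat \<Rightarrow> real" where
  "FF = (\<lambda>(m, n). (-1) ^ m / real m ^ 2 * ((-1) ^ n / real n ^ 3))"

lemma FF_sum: "FF summable_on PP"
proof (rule dom_summable)
  fix m n :: nat assume mn: "m \<ge> 1" "n \<ge> 1"
  have "\<bar>(-1) ^ (m + n) / real (m * m * n * n * n)\<bar> \<le> 1 / real (m * m * n * n * 1)"
    by (rule bnd5) (use mn in \<open>auto simp: power_abs\<close>)
  then show "\<bar>FF (m, n)\<bar> \<le> 1 / real (m * m * n * n)"
    by (simp add: FF_def power_add power2_eq_square power3_eq_cube mult_ac)
qed

lemma FF_hs: "(FF has_sum (zb 2 * zb 3)) PP"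
proof (rule has_sum_SigmaI[where g="\<lambda>m. (-1) ^ m / real m ^ 2 * zb 3"])
  fix m :: nat assume "m \<in> {1..}"
  show "((\<lambda>n. FF (m, n)) has_sum (-1) ^ m / real m ^ 2 * zb 3) {1..}"
    using has_sum_cmult_right[OF zb_hs[of 3], of "(-1) ^ m / real m ^ 2"] unfolding FF_def by simp
next
  show "((\<lambda>m. (-1) ^ m / real m ^ 2 * zb 3) has_sum zb 2 * zb 3) {1..}"
    by (intro has_sum_cmult_left zb_hs) auto
qed (rule FF_sum)

lemma stuffle: "zb 2 * zb 3 = infsum t3 PP + infsum t4 PP + zeta_nat 5"
proof -
  define A where "A = {p \<in> PP. fst p < snd p}"
  define B where "B = {p \<in> PP. snd p < fst p}"
  define D where "D = {p \<in> PP. fst p = snd p}"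
  have hA: "(FF has_sum infsum t3 PP) A"
  proof -
    have "(t3 has_sum infsum t3 PP) PP" using t3_sum by simp
    then show ?thesis
    proof (subst (asm) has_sum_reindex_bij_witness[where i="\<lambda>(m, n). (m, n - m)" and j="\<lambda>(y, x). (y, x + y)"
          and T=A and h=FF and s'="infsum t3 PP"])
      fix a assume "a \<in> PP"
      then obtain y x where a: "a = (y, x)" by (cases a)
      have "FF (y, x + y) = t3 (y, x)"
        by (simp add: FF_def t3_def mult_ac neg1_shift[of y x, symmetric])
      then show "FF ((\<lambda>(y, x). (y, x + y)) a) = t3 a" by (simp add: a)
    qed (auto simp: A_def)
  qed
  have hB: "(FF has_sum infsum t4 PP) B"
  proof -
    have "(t4 has_sum infsum t4 PP) PP" using t4_sum by simp
    then show ?thesis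
    proof (subst (asm) has_sum_reindex_bij_witness[where i="\<lambda>(m, n). (n, m - n)" and j="\<lambda>(y, x). (x + y, y)"
          and T=B and h=FF and s'="infsum t4 PP"])
      fix a assume "a \<in> PP"
      then obtain y x where a: "a = (y, x)" by (cases a)
      have "FF (x + y, y) = t4 (y, x)"
        by (simp add: FF_def t4_def mult_ac neg1_shift[of y x, symmetric])
      then show "FF ((\<lambda>(y, x). (x + y, y)) a) = t4 a" by (simp add: a)
    qed (auto simp: B_def)
  qed
  have hD: "(FF has_sum zeta_nat 5) D"
  proof -
    have "((\<lambda>n. 1 / real n ^ 5) has_sum zeta_nat 5) {1..}" by (rule zeta_hs) simp
    then show ?thesis
    proof (subst (asm) has_sum_reindex_bij_witness[where i="fst" and j="\<lambda>m. (m, m)"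
          and T=D and h=FF and s'="zeta_nat 5"])
      fix a :: nat
      have "FF (a, a) = ((-1) ^ a * (-1) ^ a) / (real a ^ 2 * real a ^ 3)" by (simp add: FF_def)
      also have "\<dots> = 1 / real a ^ 5" by (simp add: neg1_sq power_add[symmetric])
      finally show "FF (a, a) = 1 / real a ^ 5" .
    qed (auto simp: D_def)
  qed
  have "(FF has_sum (infsum t3 PP + infsum t4 PP + zeta_nat 5)) (A \<union> B \<union> D)"
    by (intro has_sum_Un_disjoint hA hB hD) (auto simp: A_def B_def D_def)
  moreover have "A \<union> B \<union> D = PP" by (auto simp: A_def B_def D_def)
  ultimately have "(FF has_sum (infsum t3 PP + infsum t4 PP + zeta_nat 5)) PP" by simp
  with FF_hs show ?thesis by (rule has_sum_unique)
qed

lemma alg1: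
  fixes y l g c :: real
  assumes "y > 0" "c * c = 1"
  shows "(1 / y ^ 3) * ((- l + c * (l + (g + c / y))) / y) = (- l) * (1 / y ^ 4) + l * (c / y ^ 4) + c * g / y ^ 4 + 1 / y ^ 5"
proof -
  have y5: "y ^ 5 = y * y ^ 4" by (subst power_Suc[symmetric]) simp
  have "(1 / y ^ 3) * ((- l + c * (l + (g + c / y))) / y) = (- l + c * l + c * g) / y ^ 4 + (c * c) / y ^ 5"
    using assms unfolding y5 by (simp add: field_simps power2_eq_square power3_eq_cube power4_eq_xxxx)
  also have "\<dots> = (- l) * (1 / y ^ 4) + l * (c / y ^ 4) + c * g / y ^ 4 + 1 / y ^ 5"
    using assms by (simp add: field_simps)
  finally show ?thesis .
qed

lemma U_iter: "(uu has_sum (- ln 2 * zeta_nat 4 + ln 2 * zb 4 + G2 + zeta_nat 5)) PP"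
proof (rule has_sum_SigmaI[where g="\<lambda>y. (1 / real y ^ 3) * ((- ln 2 + (-1) ^ y * (ln 2 + aa y)) / real y)"])
  fix y :: nat assume y: "y \<in> {1..}"
  have "((\<lambda>x. (1 / real y ^ 3) * ((-1) ^ x / (real x * (real x + real y)))) has_sum
          (1 / real y ^ 3) * ((- ln 2 + (-1) ^ y * (ln 2 + aa y)) / real y)) {1..}"
    by (rule has_sum_cmult_right, rule inner_hs) (use y in simp)
  then show "((\<lambda>x. uu (y, x)) has_sum (1 / real y ^ 3) * ((- ln 2 + (-1) ^ y * (ln 2 + aa y)) / real y)) {1..}"
    by (rule has_sum_cong[THEN iffD1, rotated]) (simp add: uu_def mult_ac)
next
  have "((\<lambda>y. (- ln 2) * (1 / real y ^ 4) + ln 2 * ((-1) ^ y / real y ^ 4) + (-1) ^ y * gg y / real y ^ 4 + 1 / real y ^ 5)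
          has_sum (- ln 2 * zeta_nat 4 + ln 2 * zb 4 + G2 + zeta_nat 5)) {1..}"
    by (intro has_sum_add has_sum_cmult_right zeta_hs zb_hs G2_hs) auto
  then show "((\<lambda>y. (1 / real y ^ 3) * ((- ln 2 + (-1) ^ y * (ln 2 + aa y)) / real y)) has_sum
          (- ln 2 * zeta_nat 4 + ln 2 * zb 4 + G2 + zeta_nat 5)) {1..}"
  proof (rule has_sum_cong[THEN iffD1, rotated])
    fix y :: nat assume "y \<in> {1..}"
    then have y: "y \<ge> 1" by simp
    have "(1 / real y ^ 3) * ((- ln 2 + (-1) ^ y * (ln 2 + aa y)) / real y) =
          (1 / real y ^ 3) * ((- ln 2 + (-1) ^ y * (ln 2 + (gg y + (-1) ^ y / real y))) / real y)"
      using y by (simp add: aa_gg)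
    also have "\<dots> = (- ln 2) * (1 / real y ^ 4) + ln 2 * ((-1) ^ y / real y ^ 4) + (-1) ^ y * gg y / real y ^ 4 + 1 / real y ^ 5"
      by (rule alg1) (use y neg1_sq in auto)
    finally show "(- ln 2) * (1 / real y ^ 4) + ln 2 * ((-1) ^ y / real y ^ 4) + (-1) ^ y * gg y / real y ^ 4 + 1 / real y ^ 5 =
          (1 / real y ^ 3) * ((- ln 2 + (-1) ^ y * (ln 2 + aa y)) / real y)" by simp
  qed
qed (rule uu_sum)

lemma U_decomp: "(uu has_sum (infsum t1 PP + infsum t2 PP + infsum t3 PP + infsum t4 PP)) PP"
proof -
  have "((\<lambda>p. t1 p + t2 p + t3 p + t4 p) has_sum (infsum t1 PP + infsum t2 PP + infsum t3 PP + infsum t4 PP)) PP"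
    by (intro has_sum_add has_sum_infsum t1_sum t2_sum t3_sum t4_sum)
  then show ?thesis
  proof (rule has_sum_cong[THEN iffD1, rotated])
    fix p assume "p \<in> PP"
    then obtain y x where p: "p = (y, x)" "y \<ge> 1" "x \<ge> 1" by auto
    show "t1 p + t2 p + t3 p + t4 p = uu p" unfolding p(1) by (rule uu_decomp) (use p in auto)
  qed
qed

theorem mainTheorem5:
  shows "integral {0..1} (\<lambda>x::real. polylog 4 (- x) / (1 + x))
    = 17/16 * zeta_nat 5 - 3/8 * zeta_nat 2 * zeta_nat 3 - 7/8 * ln 2 * zeta_nat 4"
proof -
  have I: "integral {0..1} (\<lambda>x::real. polylog 4 (- x) / (1 + x)) = ln 2 * zeta_nat 4 + G1 + zb 5"
    using int_series I_decomp by simp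
  have E: "- ln 2 * zeta_nat 4 + ln 2 * zb 4 + G2 + zeta_nat 5 = G1 + G2 + (zb 2 * zb 3 - zeta_nat 5)"
    using has_sum_unique[OF U_iter U_decomp] T1_eq T2_eq stuffle by simp
  have z2: "zb 2 = - 1/2 * zeta_nat 2" using zb_eq[of 2] by simp
  have z3: "zb 3 = - 3/4 * zeta_nat 3" using zb_eq[of 3] by simp
  have z4: "zb 4 = - 7/8 * zeta_nat 4" using zb_eq[of 4] by simp
  have z5: "zb 5 = - 15/16 * zeta_nat 5" using zb_eq[of 5] by simp
  have z23: "zb 2 * zb 3 = 3/8 * (zeta_nat 2 * zeta_nat 3)" using z2 z3 by simp
  show ?thesis using I E z23 z4 z5 by (simp add: algebra_simps)
qed

end
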